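(* Let $\mathcal{H}$ be a real Hilbert space endowed with a Lorentz cone $\mathcal{L}_{v}$ (for some $v\in\mathcal{H}$ with $\|v\|=1$). Then: (1) If $\dim(\mathcal{H})\geq3$, then $\mathcal{H}$ is not a Riesz space (and hence not a Banach lattice). (2) $\mathcal{H}$ is an $\upsilon$-quasi-lattice. (3) $\mathcal{H}$ is absolutely monotone. (4) $\mathcal{H}$ is a $\mu$-quasi-lattice (and its $\upsilon$- and $\mu$-quasi-lattice structures coincide). (5) For every $x\in\mathcal{H}$, $\|x\|=\|\lceil x\rceil\|$. Hence $\mathcal{H}$ is $1$-absolutely conormal. (6) $\mathcal{H}$ is $1$-absolutely Davies-Ng regular. (7) If $X$ and $Y$ are pre-ordered Banach spaces with closed cones, with $X$ approximately $1$-absolutely conormal and $Y$ absolutely monotone, then the operator norms of both $B(X,\mathcal{H})$ and $B(\mathcal{H},Y)$ are positively attained, i.e., $\|T\|=\sup\{\|Tx\|:x\geq0,\ \|x\|=1\}$ for $T\in B(X,\mathcal{H})_{+}$ or $T\in B(\mathcal{H},Y)_{+}$. In particular, if $\mathcal{H}_{1}$ is another real Hilbert space endowed with a Lorentz cone, then the operator norm of $B(\mathcal{H},\mathcal{H}_{1})$ is positively attained. (8) If $\alpha>0$ and $X$ and $Y$ are pre-ordered Banach spaces with closed cones, with $X$ approximately $\alpha$-absolutely conormal and $Y$ $\alpha$-absolutely normal, then both $B(X,\mathcal{H})$ and $B(\mathcal{H},Y)$ are $\alpha$-absolutely normal. In particular, if $\mathcal{H}_{1}$ is another real Hilbert space endowed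 with a Lorentz cone, then $B(\mathcal{H},\mathcal{H}_{1})$ is absolutely monotone.
   Context: A pre-ordered Banach space is a real Banach space $X$ with a cone $X_{+}$ ($X_+ + X_+\subseteq X_+$, $\lambda X_+\subseteq X_+$ for $\lambda\ge 0$); $x\ge y$ means $x-y\in X_+$. $B(X,Y)$ carries the operator norm and the cone $B(X,Y)_{+}=\{T: TX_{+}\subseteq Y_{+}\}$. For a real Hilbert space $\mathcal{H}$, a norm-one $v\in\mathcal{H}$ and $P$ the orthogonal projection onto $\{v\}^{\perp}$, the Lorentz cone is $\mathcal{L}_{v}=\{x\in\mathcal{H}:\langle v|x\rangle\geq\|Px\|\}$ (closed, proper, generating). For $\alpha>0$, a pre-ordered Banach space $X$ with closed cone is: $\alpha$-absolutely normal if $\pm x\le y$ implies $\|x\|\le\alpha\|y\|$ (absolutely monotone if $\alpha=1$); $\alpha$-absolutely conormal if for every $x$ there is $a\in X_{+}$ with $\pm x\le a$ and $\|a\|\le\alpha\|x\|$; approximately $\alpha$-absolutely conormal if for every $x$ and $\varepsilon>0$ there is $a\in X_+$ with $\pm x\le a$ and $\|a\|<\alpha\|x\|+\varepsilon$; $\alpha$-absolutely Davies-Ng regular if it is both $\alpha$-absolutely normal and approximately $\alpha$-absolutely conormal. For $x,y\in X$, let $\upsilon(\{x,y\})$ be the set of upper bounds of $\{x,y\}$, $\mu(\{x,y\})$ the set of minimal upper bounds, and $\sigma_{x,y}(z)=\|z-x\|+\|z-y\|$. $X$ (with closed cone) is an $\upsilon$-quasi-lattice (resp. $\mu$-quasi-lattice)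 if for all $x,y$ the set $\upsilon(\{x,y\})$ (resp. $\mu(\{x,y\})$) is non-empty and contains a unique minimizer of $\sigma_{x,y}$ on it, called the quasi-supremum $x\tilde{\vee}y$. The quasi-absolute value is $\lceil x\rceil:=(-x)\tilde{\vee}x$. The operator norm on $B(X,Y)$ is positively attained if $\|T\|=\sup\{\|Tx\|:x\in X_{+},\ \|x\|=1\}$ for all $T\in B(X,Y)_{+}$. *)

theory Defs
  imports "HOL-Analysis.Analysis"
begin

definition preorder_cone :: "'a::real_vector set \<Rightarrow> bool" where
  "preorder_cone C \<longleftrightarrow> 0 \<in> C \<and> (\<forall>x\<in>C. \<forall>y\<in>C. x + y \<in> C) \<and> (\<forall>x\<in>C. \<forall>c::real. c \<ge> 0 \<longrightarrow> c *\<^sub>R x \<in> C)"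

definition cle :: "'a::real_vector set \<Rightarrow> 'a \<Rightarrow> 'a \<Rightarrow> bool" where
  "cle C x y \<longleftrightarrow> y - x \<in> C"

text \<open>Lorentz cone: P x = x - <v|x> v is the orthogonal projection onto v^perp (norm v = 1).\<close>
definition lorentz :: "'a::real_inner \<Rightarrow> 'a set" where
  "lorentz v = {x. v \<bullet> x \<ge> norm (x - (v \<bullet> x) *\<^sub>R v)}"

definition ubs :: "'a::real_vector set \<Rightarrow> 'a \<Rightarrow> 'a \<Rightarrow> 'a set" where
  "ubs C x y = {z. cle C x z \<and> cle C y z}"

definition mubs :: "'a::real_vector set \<Rightarrow> 'a \<Rightarrow> 'a \<Rightarrow> 'a set" where
  "mubs C x y = {z \<in> ubs C x y. \<forall>w \<in> ubs C x y. cle C w z \<longrightarrow> w = z}"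

definition sigma :: "'a::real_normed_vector \<Rightarrow> 'a \<Rightarrow> 'a \<Rightarrow> real" where
  "sigma x y z = norm (z - x) + norm (z - y)"

definition is_qsup :: "'a::real_normed_vector set \<Rightarrow> 'a \<Rightarrow> 'a \<Rightarrow> 'a \<Rightarrow> bool" where
  "is_qsup S x y z \<longleftrightarrow> z \<in> S \<and> (\<forall>w\<in>S. sigma x y z \<le> sigma x y w)"

definition ups_quasi_lattice :: "'a::real_normed_vector set \<Rightarrow> bool" where
  "ups_quasi_lattice C \<longleftrightarrow> closed C \<and>
     (\<forall>x y. ubs C x y \<noteq> {} \<and> (\<exists>!z. is_qsup (ubs C x y) x y z))"

definition mu_quasi_lattice :: "'a::real_normed_vector set \<Rightarrow> bool" where
  "mu_quasi_lattice C \<longleftrightarrow> closed C \<and>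
     (\<forall>x y. mubs C x y \<noteq> {} \<and> (\<exists>!z. is_qsup (mubs C x y) x y z))"

definition qsup_ups :: "'a::real_normed_vector set \<Rightarrow> 'a \<Rightarrow> 'a \<Rightarrow> 'a" where
  "qsup_ups C x y = (THE z. is_qsup (ubs C x y) x y z)"

definition qsup_mu :: "'a::real_normed_vector set \<Rightarrow> 'a \<Rightarrow> 'a \<Rightarrow> 'a" where
  "qsup_mu C x y = (THE z. is_qsup (mubs C x y) x y z)"

definition qabs :: "'a::real_normed_vector set \<Rightarrow> 'a \<Rightarrow> 'a" where
  "qabs C x = qsup_ups C (- x) x"

definition abs_normal :: "'a::real_normed_vector set \<Rightarrow> real \<Rightarrow> bool" where
  "abs_normal C \<alpha> \<longleftrightarrow> (\<forall>x y. cle C (- x) y \<and> cle C x y \<longrightarrow> norm x \<le> \<alpha> * norm y)"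

abbreviation abs_monotone :: "'a::real_normed_vector set \<Rightarrow> bool" where
  "abs_monotone C \<equiv> abs_normal C 1"

definition abs_conormal :: "'a::real_normed_vector set \<Rightarrow> real \<Rightarrow> bool" where
  "abs_conormal C \<alpha> \<longleftrightarrow> (\<forall>x. \<exists>a\<in>C. cle C (- x) a \<and> cle C x a \<and> norm a \<le> \<alpha> * norm x)"

definition approx_abs_conormal :: "'a::real_normed_vector set \<Rightarrow> real \<Rightarrow> bool" where
  "approx_abs_conormal C \<alpha> \<longleftrightarrow>
     (\<forall>x. \<forall>\<epsilon>>0. \<exists>a\<in>C. cle C (- x) a \<and> cle C x a \<and> norm a < \<alpha> * norm x + \<epsilon>)"

definition abs_davies_ng :: "'a::real_normed_vector set \<Rightarrow> real \<Rightarrow> bool" where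
  "abs_davies_ng C \<alpha> \<longleftrightarrow> abs_normal C \<alpha> \<and> approx_abs_conormal C \<alpha>"

definition op_cone :: "'a::real_normed_vector set \<Rightarrow> 'b::real_normed_vector set \<Rightarrow> ('a \<Rightarrow>\<^sub>L 'b) set" where
  "op_cone CX CY = {T. \<forall>x\<in>CX. blinfun_apply T x \<in> CY}"

text \<open>Positively attained operator norm (sup of the empty set of norms taken as 0).\<close>
definition pos_attained :: "'a::real_normed_vector set \<Rightarrow> 'b::real_normed_vector set \<Rightarrow> bool" where
  "pos_attained CX CY \<longleftrightarrow> (\<forall>T \<in> op_cone CX CY.
     norm T = Sup (insert 0 {norm (blinfun_apply T x) | x. x \<in> CX \<and> norm x = 1}))"

definition riesz_space :: "'a::real_vector set \<Rightarrow> bool" where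
  "riesz_space C \<longleftrightarrow> preorder_cone C \<and> (\<forall>x. x \<in> C \<and> - x \<in> C \<longrightarrow> x = 0) \<and>
     (\<forall>x y. \<exists>s \<in> ubs C x y. \<forall>z \<in> ubs C x y. cle C s z)"

definition lat_sup :: "'a::real_vector set \<Rightarrow> 'a \<Rightarrow> 'a \<Rightarrow> 'a" where
  "lat_sup C x y = (THE s. s \<in> ubs C x y \<and> (\<forall>z \<in> ubs C x y. cle C s z))"

definition banach_lattice :: "'a::real_normed_vector set \<Rightarrow> bool" where
  "banach_lattice C \<longleftrightarrow> riesz_space C \<and>
     (\<forall>x y. cle C (lat_sup C x (- x)) (lat_sup C y (- y)) \<longrightarrow> norm x \<le> norm y)"

end

theory Submission
  imports Defs
begin


definition pj :: "'a::real_inner \<Rightarrow> 'a \<Rightarrow> 'a" where "pj v x = x - (v \<bullet> x) *\<^sub>R v"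

lemma L_iff: "x \<in> lorentz v \<longleftrightarrow> norm (pj v x) \<le> v \<bullet> x"
  by (simp add: lorentz_def pj_def)

lemma vv: fixes v :: "'a::real_inner" assumes "norm v = 1" shows "v \<bullet> v = 1"
  using assms by (metis norm_eq_sqrt_inner real_sqrt_eq_1_iff)

lemma P_orth: fixes v :: "'a::real_inner" assumes "norm v = 1"
  shows "v \<bullet> pj v x = 0"
  using vv[OF assms] by (simp add: pj_def inner_diff_right)

lemma decomp: "x = (v \<bullet> x) *\<^sub>R v + pj v x" by (simp add: pj_def)

lemma P_add[simp]: "pj v (x + y) = pj v x + pj v y"
  by (simp add: pj_def inner_add_right algebra_simps)
lemma P_diff[simp]: "pj v (x - y) = pj v x - pj v y"
  by (simp add: pj_def inner_diff_right algebra_simps)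
lemma P_scale[simp]: "pj v (c *\<^sub>R x) = c *\<^sub>R pj v x"
  by (simp add: pj_def algebra_simps)
lemma P_neg[simp]: "pj v (- x) = - pj v x"
  by (simp add: pj_def algebra_simps)
lemma P_v: "norm v = 1 \<Longrightarrow> pj v v = 0" by (simp add: pj_def vv)
lemma P_orthvec: "v \<bullet> e = 0 \<Longrightarrow> pj v e = e" by (simp add: pj_def)

lemma norm_sq: fixes v :: "'a::real_inner" assumes "norm v = 1"
  shows "(norm x)\<^sup>2 = (v \<bullet> x)\<^sup>2 + (norm (pj v x))\<^sup>2"
proof -
  let ?p = "pj v x"
  have o: "v \<bullet> ?p = 0" by (rule P_orth[OF assms])
  have "x = (v \<bullet> x) *\<^sub>R v + ?p" by (rule decomp)
  hence "(norm x)\<^sup>2 = ((v \<bullet> x) *\<^sub>R v + ?p) \<bullet> ((v \<bullet> x) *\<^sub>R v + ?p)"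
    by (metis power2_norm_eq_inner)
  also have "\<dots> = (v \<bullet> x)\<^sup>2 * (v \<bullet> v) + 2 * (v \<bullet> x) * (v \<bullet> ?p) + ?p \<bullet> ?p"
    by (simp add: inner_add_left inner_add_right inner_commute power2_eq_square algebra_simps)
  also have "\<dots> = (v \<bullet> x)\<^sup>2 + (norm ?p)\<^sup>2" using o vv[OF assms] by (simp add: power2_norm_eq_inner)
  finally show ?thesis .
qed

lemma L_add: "x \<in> lorentz v \<Longrightarrow> y \<in> lorentz v \<Longrightarrow> x + y \<in> lorentz v"
  unfolding L_iff using norm_triangle_ineq[of "pj v x" "pj v y"]
  by (simp add: inner_add_right)

lemma L_scale: "x \<in> lorentz v \<Longrightarrow> c \<ge> 0 \<Longrightarrow> c *\<^sub>R x \<in> lorentz v"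
  unfolding L_iff by (simp add: mult_left_mono)

lemma L_zero: "0 \<in> lorentz v" unfolding L_iff by (simp add: pj_def)

lemma L_cone: "preorder_cone (lorentz v)"
  unfolding preorder_cone_def using L_add L_scale L_zero by blast

lemma L_proper: fixes v :: "'a::real_inner"
  assumes "x \<in> lorentz v" "- x \<in> lorentz v" shows "x = 0"
proof -
  have a: "v \<bullet> x \<ge> norm (pj v x)" using assms(1) by (simp add: L_iff)
  have b: "- (v \<bullet> x) \<ge> norm (pj v x)"
    using assms(2) unfolding L_iff by simp
  have "norm (pj v x) = 0" "v \<bullet> x = 0" using a b norm_ge_zero[of "pj v x"] by linarith+
  thus ?thesis using decomp[of x v] by simp
qed

lemma L_closed: fixes v :: "'a::real_inner" shows "closed (lorentz v)"
  unfolding lorentz_def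
  by (intro closed_Collect_le continuous_intros)

lemma L_mid: "a + d \<in> lorentz v \<Longrightarrow> a - d \<in> lorentz v \<Longrightarrow> a \<in> lorentz v"
proof -
  assume "a + d \<in> lorentz v" "a - d \<in> lorentz v"
  hence "(1/2::real) *\<^sub>R ((a + d) + (a - d)) \<in> lorentz v" using L_add L_scale by (metis less_eq_real_def zero_less_divide_1_iff zero_less_numeral)
  moreover have "(1/2::real) *\<^sub>R ((a + d) + (a - d)) = a" by (simp add: scaleR_2[symmetric])
  ultimately show ?thesis by simp
qed

lemma ub_bound: fixes v :: "'a::real_inner"
  assumes "u + d \<in> lorentz v" "u - d \<in> lorentz v" shows "norm (pj v d) \<le> v \<bullet> u"
proof -
  have "norm (pj v u + pj v d) \<le> v \<bullet> u + v \<bullet> d" "norm (pj v u - pj v d) \<le> v \<bullet> u - v \<bullet> d"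
    using assms by (auto simp: L_iff inner_add_right inner_diff_right)
  moreover have "norm (2 *\<^sub>R pj v d) \<le> norm (pj v u + pj v d) + norm (pj v u - pj v d)"
    using norm_triangle_ineq4[of "pj v u + pj v d" "pj v u - pj v d"] by (simp add: algebra_simps scaleR_2)
  ultimately show ?thesis by simp
qed


lemma pm_aux: fixes d :: "'a::real_vector" assumes "d = s *\<^sub>R v + r *\<^sub>R e"
  shows "(r *\<^sub>R v + s *\<^sub>R e) + d = (r + s) *\<^sub>R (v + e)" "(r *\<^sub>R v + s *\<^sub>R e) - d = (r - s) *\<^sub>R (v - e)"
  using assms by (simp_all add: algebra_simps)

context
  fixes v d :: "'a::real_inner"
  assumes nv: "norm v = 1" and nA: "d \<notin> lorentz v" and nB: "- d \<notin> lorentz v"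
begin

definition "rho = norm (pj v d)"
definition "ss = v \<bullet> d"
definition "ee = (1 / rho) *\<^sub>R pj v d"

lemma rho_bounds: "\<bar>ss\<bar> < rho" "rho > 0"
  using nA nB unfolding L_iff rho_def ss_def by auto

lemma ee_facts: "v \<bullet> ee = 0" "ee \<bullet> ee = 1" "pj v ee = ee" "norm ee = 1" "pj v d = rho *\<^sub>R ee"
  "d = ss *\<^sub>R v + rho *\<^sub>R ee" "d \<bullet> ee = rho" "ee \<bullet> v = 0"
proof -
  have r: "rho > 0" using rho_bounds by simp
  show o: "v \<bullet> ee = 0" unfolding ee_def using P_orth[OF nv] by simp
  show n: "norm ee = 1" unfolding ee_def rho_def using r rho_def by simp
  show "ee \<bullet> ee = 1" using n by (simp add: norm_eq_sqrt_inner)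
  show "pj v ee = ee" using o by (simp add: P_orthvec)
  show p: "pj v d = rho *\<^sub>R ee" unfolding ee_def using r by simp
  show dd: "d = ss *\<^sub>R v + rho *\<^sub>R ee" using decomp[of d v] p ss_def by simp
  show "ee \<bullet> v = 0" using o by (simp add: inner_commute)
  have "d \<bullet> ee = ss * (v \<bullet> ee) + rho * (ee \<bullet> ee)" by (subst dd) (simp add: inner_add_left)
  thus "d \<bullet> ee = rho" using o \<open>ee \<bullet> ee = 1\<close> by simp
qed

definition "uC = rho *\<^sub>R v + ss *\<^sub>R ee"

lemma uC_pm: "uC + d = (rho + ss) *\<^sub>R (v + ee)" "uC - d = (rho - ss) *\<^sub>R (v - ee)"
  unfolding uC_def using pm_aux[OF ee_facts(6)] by simp_all

lemma vpe: "v + ee \<in> lorentz v" "v - ee \<in> lorentz v" "norm (v + ee) = sqrt 2" "norm (v - ee) = sqrt 2"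
proof -
  show "v + ee \<in> lorentz v" unfolding L_iff using ee_facts(1-5,7,8) P_v[OF nv] vv[OF nv] by (simp add: inner_add_right)
  show "v - ee \<in> lorentz v" unfolding L_iff using ee_facts(1-5,7,8) P_v[OF nv] vv[OF nv] by (simp add: inner_diff_right)
  have "(v + ee) \<bullet> (v + ee) = 2" using ee_facts(1-5,7,8) vv[OF nv] by (simp add: inner_add_left inner_add_right)
  thus "norm (v + ee) = sqrt 2" by (simp add: norm_eq_sqrt_inner)
  have "(v - ee) \<bullet> (v - ee) = 2" using ee_facts(1-5,7,8) vv[OF nv] by (simp add: inner_diff_left inner_diff_right)
  thus "norm (v - ee) = sqrt 2" by (simp add: norm_eq_sqrt_inner)
qed

lemma uC_ub: "uC + d \<in> lorentz v" "uC - d \<in> lorentz v"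
proof -
  have "rho + ss \<ge> 0" "rho - ss \<ge> 0" using rho_bounds by auto
  thus "uC + d \<in> lorentz v" "uC - d \<in> lorentz v"
    using L_scale[OF vpe(1), of "rho + ss"] L_scale[OF vpe(2), of "rho - ss"] by (simp_all only: uC_pm)
qed

lemma uC_val: "sqrt 2 * (norm (uC + d) + norm (uC - d)) = 4 * rho"
proof -
  have "norm (uC + d) = (rho + ss) * sqrt 2" "norm (uC - d) = (rho - ss) * sqrt 2"
    using uC_pm vpe rho_bounds by auto
  hence "sqrt 2 * (norm (uC + d) + norm (uC - d)) = (2 * rho) * (sqrt 2 * sqrt 2)"
    by (simp only:) (simp add: algebra_simps)
  also have "sqrt 2 * sqrt 2 = 2" by simp
  finally show ?thesis by simp
qed

lemma lowerC: assumes "u + d \<in> lorentz v" "u - d \<in> lorentz v"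
  shows "sqrt 2 * (norm (u + d) + norm (u - d)) \<ge> 4 * rho"
proof -
  have a: "(u + d) \<bullet> (v + ee) \<le> norm (u + d) * sqrt 2" using norm_cauchy_schwarz[of "u + d" "v + ee"] vpe(3) by simp
  have b: "(u - d) \<bullet> (v - ee) \<le> norm (u - d) * sqrt 2" using norm_cauchy_schwarz[of "u - d" "v - ee"] vpe(4) by simp
  have c: "(u + d) \<bullet> (v + ee) + (u - d) \<bullet> (v - ee) = 2 * (u \<bullet> v) + 2 * (d \<bullet> ee)"
    by (simp add: inner_add_left inner_add_right inner_diff_left inner_diff_right inner_commute)
  have "rho \<le> v \<bullet> u" using ub_bound[OF assms] rho_def by simp
  thus ?thesis using a b c ee_facts(1-5,7,8) by (simp add: inner_commute algebra_simps)
qed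

lemma uC_min: assumes "u + d \<in> lorentz v" "u - d \<in> lorentz v"
  shows "norm (uC + d) + norm (uC - d) \<le> norm (u + d) + norm (u - d)"
proof -
  have "sqrt 2 * (norm (uC + d) + norm (uC - d)) \<le> sqrt 2 * (norm (u + d) + norm (u - d))"
    using lowerC[OF assms] uC_val by linarith
  thus ?thesis using mult_le_cancel_left_pos[of "sqrt 2"] by simp
qed

lemma uC_uniq: assumes "u + d \<in> lorentz v" "u - d \<in> lorentz v"
  and le: "norm (u + d) + norm (u - d) \<le> norm (uC + d) + norm (uC - d)"
  shows "u = uC"
proof -
  have a: "(u + d) \<bullet> (v + ee) \<le> norm (u + d) * sqrt 2" using norm_cauchy_schwarz[of "u + d" "v + ee"] vpe(3) by simp
  have b: "(u - d) \<bullet> (v - ee) \<le> norm (u - d) * sqrt 2" using norm_cauchy_schwarz[of "u - d" "v - ee"] vpe(4) by simp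
  have c: "(u + d) \<bullet> (v + ee) + (u - d) \<bullet> (v - ee) = 2 * (u \<bullet> v) + 2 * (d \<bullet> ee)"
    by (simp add: inner_add_left inner_add_right inner_diff_left inner_diff_right inner_commute)
  have r: "rho \<le> v \<bullet> u" using ub_bound[OF assms(1,2)] rho_def by simp
  have s2: "sqrt 2 * (norm (u + d) + norm (u - d)) \<le> 4 * rho"
  proof -
    have "sqrt 2 * (norm (u + d) + norm (u - d)) \<le> sqrt 2 * (norm (uC + d) + norm (uC - d))"
      using le by (simp add: mult_le_cancel_left_pos)
    thus ?thesis using uC_val by linarith
  qed
  have ea: "(u + d) \<bullet> (v + ee) = norm (u + d) * norm (v + ee)"
    using a b c r s2 ee_facts(1-5,7,8) vpe by (simp add: inner_commute algebra_simps)
  have eb: "(u - d) \<bullet> (v - ee) = norm (u - d) * norm (v - ee)"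
    using a b c r s2 ee_facts(1-5,7,8) vpe by (simp add: inner_commute algebra_simps)
  define \<alpha> where "\<alpha> = norm (u + d) / sqrt 2"
  define \<beta> where "\<beta> = norm (u - d) / sqrt 2"
  have ua: "u + d = \<alpha> *\<^sub>R (v + ee)"
  proof -
    have "sqrt 2 *\<^sub>R (u + d) = norm (u + d) *\<^sub>R (v + ee)"
      using ea[unfolded norm_cauchy_schwarz_eq] vpe by simp
    hence "(1 / sqrt 2) *\<^sub>R (sqrt 2 *\<^sub>R (u + d)) = \<alpha> *\<^sub>R (v + ee)"
      unfolding \<alpha>_def by simp
    thus ?thesis by simp
  qed
  have ub: "u - d = \<beta> *\<^sub>R (v - ee)"
  proof -
    have "sqrt 2 *\<^sub>R (u - d) = norm (u - d) *\<^sub>R (v - ee)"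
      using eb[unfolded norm_cauchy_schwarz_eq] vpe by simp
    hence "(1 / sqrt 2) *\<^sub>R (sqrt 2 *\<^sub>R (u - d)) = \<beta> *\<^sub>R (v - ee)"
      unfolding \<beta>_def by simp
    thus ?thesis by simp
  qed
  have d2: "2 *\<^sub>R d = (\<alpha> - \<beta>) *\<^sub>R v + (\<alpha> + \<beta>) *\<^sub>R ee"
  proof -
    have "2 *\<^sub>R d = (u + d) - (u - d)" by (simp add: scaleR_2)
    also have "\<dots> = \<alpha> *\<^sub>R (v + ee) - \<beta> *\<^sub>R (v - ee)" using ua ub by simp
    finally show ?thesis by (simp add: algebra_simps)
  qed
  have u2: "2 *\<^sub>R u = (\<alpha> + \<beta>) *\<^sub>R v + (\<alpha> - \<beta>) *\<^sub>R ee"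
  proof -
    have "2 *\<^sub>R u = (u + d) + (u - d)" by (simp add: scaleR_2)
    also have "\<dots> = \<alpha> *\<^sub>R (v + ee) + \<beta> *\<^sub>R (v - ee)" using ua ub by simp
    finally show ?thesis by (simp add: algebra_simps)
  qed
  have "(2 *\<^sub>R d) \<bullet> v = \<alpha> - \<beta>" using d2 ee_facts(1-5,7,8) vv[OF nv] by (simp add: inner_add_left)
  hence s: "\<alpha> - \<beta> = 2 * ss" unfolding ss_def by (simp add: inner_commute)
  have "(2 *\<^sub>R d) \<bullet> ee = \<alpha> + \<beta>" by (simp only: d2) (simp add: inner_add_left ee_facts(2,8) inner_commute[of v] ee_facts(1))
  hence r: "\<alpha> + \<beta> = 2 * rho" using ee_facts(7) by simp
  have "2 *\<^sub>R u = 2 *\<^sub>R uC" unfolding uC_def using u2 s r by (simp add: algebra_simps)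
  thus ?thesis by simp
qed

lemma uC_minimal: assumes "u + d \<in> lorentz v" "u - d \<in> lorentz v" "uC - u \<in> lorentz v"
  shows "u = uC"
proof -
  have r: "rho \<le> v \<bullet> u" using ub_bound[OF assms(1,2)] rho_def by simp
  have "v \<bullet> uC = rho" unfolding uC_def using vv[OF nv] ee_facts(1-5,7,8) by (simp add: inner_add_right)
  hence e: "v \<bullet> (uC - u) = rho - v \<bullet> u" by (simp add: inner_diff_right)
  have "norm (pj v (uC - u)) \<le> v \<bullet> (uC - u)" using assms(3) unfolding L_iff .
  hence "norm (pj v (uC - u)) = 0" "v \<bullet> (uC - u) = 0" using r e norm_ge_zero[of "pj v (uC - u)"] by linarith+
  hence "pj v (uC - u) = 0" "v \<bullet> (uC - u) = 0" by (simp_all del: P_diff)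
  hence "uC - u = 0" using decomp[of "uC - u" v] by (simp del: P_diff)
  thus ?thesis by simp
qed

lemma uC_norm: "norm uC = norm d"
proof -
  have "pj v uC = ss *\<^sub>R ee" unfolding uC_def using ee_facts(1-5,7,8) P_v[OF nv] by simp
  moreover have "v \<bullet> uC = rho" unfolding uC_def using vv[OF nv] ee_facts(1-5,7,8) by (simp add: inner_add_right)
  ultimately have "(norm uC)\<^sup>2 = rho\<^sup>2 + ss\<^sup>2" using norm_sq[OF nv, of uC] ee_facts(1-5,7,8) by simp
  moreover have "(norm d)\<^sup>2 = ss\<^sup>2 + rho\<^sup>2" using norm_sq[OF nv, of d] rho_def ss_def by simp
  ultimately have "(norm uC)\<^sup>2 = (norm d)\<^sup>2" by simp
  thus ?thesis using power2_eq_iff_nonneg[of "norm uC" "norm d"] by simp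
qed

end

lemma A_min: fixes d :: "'a::real_inner"
  shows "norm (d + d) + norm (d - d) \<le> norm (u + d) + norm (u - d)"
  using norm_triangle_ineq4[of "u + d" "u - d"] by simp

lemma A_uniq: fixes d :: "'a::real_inner"
  assumes dL: "d \<in> lorentz v" and u1: "u + d \<in> lorentz v" and u2: "u - d \<in> lorentz v"
  and le: "norm (u + d) + norm (u - d) \<le> norm (d + d) + norm (d - d)"
  shows "u = d"
proof (rule ccontr)
  assume ne: "u \<noteq> d"
  define x where "x = u + d"
  define y where "y = d - u"
  have xy: "x + y = d + d" unfolding x_def y_def by simp
  have ny: "norm y = norm (u - d)" unfolding y_def by (simp add: norm_minus_commute)
  have "norm x + norm y \<le> norm (x + y)"
    using le ny unfolding xy by (simp add: x_def)
  hence "norm (x + y) = norm x + norm y" using norm_triangle_ineq[of x y] by linarith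
  hence eq: "norm x *\<^sub>R y = norm y *\<^sub>R x" by (simp add: norm_triangle_eq)
  have y0: "y \<noteq> 0" using ne unfolding y_def by simp
  hence nyp: "norm y > 0" by simp
  have my: "- y \<in> lorentz v" using u2 unfolding y_def by simp
  show False
  proof (cases "x = 0")
    case True
    hence "u = - d" unfolding x_def by (simp add: add_eq_0_iff2)
    hence "- (d + d) \<in> lorentz v" using u2 by (simp add: algebra_simps)
    moreover have "d + d \<in> lorentz v" using dL L_add by blast
    ultimately have "d + d = 0" using L_proper by blast
    hence "y = 0" using \<open>u = - d\<close> unfolding y_def by simp
    thus False using y0 by simp
  next
    case False
    hence "norm x > 0" by simp
    have "y = (norm y / norm x) *\<^sub>R x"
    proof -
      have "(1 / norm x) *\<^sub>R (norm x *\<^sub>R y) = (1 / norm x) *\<^sub>R (norm y *\<^sub>R x)" using eq by simp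
      thus ?thesis using \<open>norm x > 0\<close> by simp
    qed
    moreover have "x \<in> lorentz v" using u1 unfolding x_def .
    ultimately have "y \<in> lorentz v" using L_scale[of x v "norm y / norm x"] by simp
    hence "y = 0" using my L_proper by blast
    thus False using y0 by simp
  qed
qed

definition ust :: "'a::real_inner \<Rightarrow> 'a \<Rightarrow> 'a" where
  "ust v d = (if d \<in> lorentz v then d else if - d \<in> lorentz v then - d else uC v d)"

lemma ust_ub: fixes v :: "'a::real_inner" assumes nv: "norm v = 1"
  shows "ust v d + d \<in> lorentz v" "ust v d - d \<in> lorentz v"
proof -
  have "ust v d + d \<in> lorentz v \<and> ust v d - d \<in> lorentz v"
  proof (cases "d \<in> lorentz v")
    case True
    have e: "ust v d = d" unfolding ust_def using True by simp
    show ?thesis unfolding e using L_add[OF True True] L_zero by simp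
  next
    case F: False
    show ?thesis
    proof (cases "- d \<in> lorentz v")
      case True
      have e: "ust v d = - d" unfolding ust_def using F True by simp
      have "- d + - d \<in> lorentz v" using L_add[OF True True] .
      hence "- d - d \<in> lorentz v" by (metis diff_conv_add_uminus)
      thus ?thesis unfolding e using L_zero by simp
    next
      case False
      have e: "ust v d = uC v d" unfolding ust_def using F False by simp
      show ?thesis unfolding e using uC_ub[OF nv F False] by simp
    qed
  qed
  thus "ust v d + d \<in> lorentz v" "ust v d - d \<in> lorentz v" by blast+
qed

lemma ust_all: fixes v :: "'a::real_inner" assumes nv: "norm v = 1"
  and u1: "u + d \<in> lorentz v" and u2: "u - d \<in> lorentz v"
  shows "norm (ust v d + d) + norm (ust v d - d) \<le> norm (u + d) + norm (u - d)"
    "norm (u + d) + norm (u - d) \<le> norm (ust v d + d) + norm (ust v d - d) \<Longrightarrow> u = ust v d"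
    "ust v d - u \<in> lorentz v \<Longrightarrow> u = ust v d"
proof -
  consider (A) "d \<in> lorentz v" | (B) "d \<notin> lorentz v" "- d \<in> lorentz v"
    | (C) "d \<notin> lorentz v" "- d \<notin> lorentz v" by blast
  hence "(norm (ust v d + d) + norm (ust v d - d) \<le> norm (u + d) + norm (u - d)) \<and>
    (norm (u + d) + norm (u - d) \<le> norm (ust v d + d) + norm (ust v d - d) \<longrightarrow> u = ust v d) \<and>
    (ust v d - u \<in> lorentz v \<longrightarrow> u = ust v d)"
  proof cases
    case A
    have e: "ust v d = d" unfolding ust_def using A by simp
    have m: "u = d" if "d - u \<in> lorentz v"
    proof -
      have "- (u - d) = d - u" by simp
      hence "- (u - d) \<in> lorentz v" using that by simp
      hence "u - d = 0" using L_proper u2 by blast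
      thus ?thesis by simp
    qed
    show ?thesis unfolding e using A_min[of d u] A_uniq[OF A u1 u2] m by blast
  next
    case B
    have e: "ust v d = - d" unfolding ust_def using B by simp
    have u1': "u + - d \<in> lorentz v" "u - - d \<in> lorentz v" using u1 u2 by auto
    have e1: "norm (u + - d) + norm (u - - d) = norm (u + d) + norm (u - d)" by simp
    have e2: "norm (- d + - d) + norm (- d - - d) = norm (- d + d) + norm (- d - d)"
      by (simp add: norm_minus_commute)
    have m: "u = - d" if h: "- d - u \<in> lorentz v"
    proof -
      have e: "- (u + d) = - d - u" by simp
      have "- (u + d) \<in> lorentz v" by (subst e) (rule h)
      hence "u + d = 0" using L_proper u1 by blast
      thus ?thesis by (simp add: add_eq_0_iff2)
    qed
    have i1: "norm (- d + d) + norm (- d - d) \<le> norm (u + d) + norm (u - d)"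
      using A_min[of "- d" u] e1 e2 by linarith
    have i2: "norm (u + d) + norm (u - d) \<le> norm (- d + d) + norm (- d - d) \<Longrightarrow> u = - d"
      using A_uniq[OF B(2) u1'] e1 e2 by linarith
    show ?thesis unfolding e using i1 i2 m by blast
  next
    case C
    have e: "ust v d = uC v d" unfolding ust_def using C by simp
    show ?thesis unfolding e using uC_min[OF nv C u1 u2]
        uC_uniq[OF nv C u1 u2] uC_minimal[OF nv C u1 u2] by blast
  qed
  thus "norm (ust v d + d) + norm (ust v d - d) \<le> norm (u + d) + norm (u - d)"
    "norm (u + d) + norm (u - d) \<le> norm (ust v d + d) + norm (ust v d - d) \<Longrightarrow> u = ust v d"
    "ust v d - u \<in> lorentz v \<Longrightarrow> u = ust v d" by blast+
qed

lemma ust_norm: fixes v :: "'a::real_inner" assumes nv: "norm v = 1"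
  shows "norm (ust v d) = norm d"
proof -
  consider (A) "d \<in> lorentz v" | (B) "d \<notin> lorentz v" "- d \<in> lorentz v"
    | (C) "d \<notin> lorentz v" "- d \<notin> lorentz v" by blast
  thus ?thesis
  proof cases
    case A thus ?thesis unfolding ust_def by simp
  next
    case B thus ?thesis unfolding ust_def by simp
  next
    case C thus ?thesis unfolding ust_def using uC_norm[OF nv C] by simp
  qed
qed


definition zst :: "'a::real_inner \<Rightarrow> 'a \<Rightarrow> 'a \<Rightarrow> 'a" where
  "zst v x y = (1/2) *\<^sub>R (x + y) + ust v ((1/2) *\<^sub>R (y - x))"

lemma shift_eqs: fixes x y z :: "'a::real_vector"
  shows "z - x = (z - (1/2) *\<^sub>R (x + y)) + (1/2) *\<^sub>R (y - x)"
    "z - y = (z - (1/2) *\<^sub>R (x + y)) - (1/2) *\<^sub>R (y - x)"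
  by (simp_all add: algebra_simps scaleR_2[symmetric] flip: scaleR_add_left)

lemma ubs_iff: "z \<in> ubs (lorentz v) x y \<longleftrightarrow>
   (z - (1/2) *\<^sub>R (x + y)) + (1/2) *\<^sub>R (y - x) \<in> lorentz v \<and>
   (z - (1/2) *\<^sub>R (x + y)) - (1/2) *\<^sub>R (y - x) \<in> lorentz v"
  unfolding ubs_def cle_def mem_Collect_eq
  by (subst shift_eqs(1)[of z x y], subst shift_eqs(2)[of z y x]) (rule refl)

lemma sigma_eq: "sigma x y z = norm ((z - (1/2) *\<^sub>R (x + y)) + (1/2) *\<^sub>R (y - x)) +
   norm ((z - (1/2) *\<^sub>R (x + y)) - (1/2) *\<^sub>R (y - x))"
  unfolding sigma_def
  by (subst shift_eqs(1)[of z x y], subst shift_eqs(2)[of z y x]) (rule refl)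

lemma zst_shift: "zst v x y - (1/2) *\<^sub>R (x + y) = ust v ((1/2) *\<^sub>R (y - x))"
  unfolding zst_def by simp

lemma zst_ubs: fixes v :: "'a::real_inner" assumes nv: "norm v = 1"
  shows "zst v x y \<in> ubs (lorentz v) x y"
  unfolding ubs_iff zst_shift using ust_ub[OF nv] by blast

lemma zst_eq: "z - (1/2) *\<^sub>R (x + y) = ust v ((1/2) *\<^sub>R (y - x)) \<Longrightarrow> z = zst v x y"
  unfolding zst_def by (metis diff_add_cancel add.commute)

lemma zst_qsup: fixes v :: "'a::real_inner" assumes nv: "norm v = 1"
  shows "is_qsup (ubs (lorentz v) x y) x y z \<longleftrightarrow> z = zst v x y"
proof
  assume q: "is_qsup (ubs (lorentz v) x y) x y z"
  hence zu: "z \<in> ubs (lorentz v) x y" and le: "sigma x y z \<le> sigma x y (zst v x y)"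
    using zst_ubs[OF nv] unfolding is_qsup_def by auto
  from zu have z1: "(z - (1/2) *\<^sub>R (x + y)) + (1/2) *\<^sub>R (y - x) \<in> lorentz v"
    and z2: "(z - (1/2) *\<^sub>R (x + y)) - (1/2) *\<^sub>R (y - x) \<in> lorentz v"
    unfolding ubs_iff by auto
  have le': "norm ((z - (1/2) *\<^sub>R (x + y)) + (1/2) *\<^sub>R (y - x)) + norm ((z - (1/2) *\<^sub>R (x + y)) - (1/2) *\<^sub>R (y - x))
     \<le> norm (ust v ((1/2) *\<^sub>R (y - x)) + (1/2) *\<^sub>R (y - x)) + norm (ust v ((1/2) *\<^sub>R (y - x)) - (1/2) *\<^sub>R (y - x))"
    using le unfolding sigma_eq zst_shift .
  show "z = zst v x y" by (rule zst_eq, rule ust_all(2)[OF nv z1 z2 le'])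
next
  assume e: "z = zst v x y"
  show "is_qsup (ubs (lorentz v) x y) x y z"
    unfolding is_qsup_def
  proof (intro conjI ballI)
    show "z \<in> ubs (lorentz v) x y" using e zst_ubs[OF nv] by simp
    fix w assume "w \<in> ubs (lorentz v) x y"
    hence w1: "(w - (1/2) *\<^sub>R (x + y)) + (1/2) *\<^sub>R (y - x) \<in> lorentz v"
      and w2: "(w - (1/2) *\<^sub>R (x + y)) - (1/2) *\<^sub>R (y - x) \<in> lorentz v"
      unfolding ubs_iff by auto
    show "sigma x y z \<le> sigma x y w"
      unfolding e sigma_eq zst_shift by (rule ust_all(1)[OF nv w1 w2])
  qed
qed

lemma cle_aux: fixes a w m :: "'a::real_vector" shows "a - (w - m) = (m + a) - w"
  by (simp add: algebra_simps)

lemma zst_mubs: fixes v :: "'a::real_inner" assumes nv: "norm v = 1"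
  shows "zst v x y \<in> mubs (lorentz v) x y"
  unfolding mubs_def
proof (intro CollectI conjI ballI impI)
  show "zst v x y \<in> ubs (lorentz v) x y" by (rule zst_ubs[OF nv])
  fix w assume w: "w \<in> ubs (lorentz v) x y" and c: "cle (lorentz v) w (zst v x y)"
  have c': "ust v ((1/2) *\<^sub>R (y - x)) - (w - (1/2) *\<^sub>R (x + y)) \<in> lorentz v"
    using c unfolding cle_def zst_def cle_aux .
  from w have w1: "(w - (1/2) *\<^sub>R (x + y)) + (1/2) *\<^sub>R (y - x) \<in> lorentz v"
    and w2: "(w - (1/2) *\<^sub>R (x + y)) - (1/2) *\<^sub>R (y - x) \<in> lorentz v"
    unfolding ubs_iff by auto
  show "w = zst v x y" by (rule zst_eq, rule ust_all(3)[OF nv w1 w2 c'])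
qed

lemma zst_qsup_mu: fixes v :: "'a::real_inner" assumes nv: "norm v = 1"
  shows "is_qsup (mubs (lorentz v) x y) x y z \<longleftrightarrow> z = zst v x y"
proof -
  have sub: "mubs (lorentz v) x y \<subseteq> ubs (lorentz v) x y" unfolding mubs_def by auto
  show ?thesis
  proof
    assume q: "is_qsup (mubs (lorentz v) x y) x y z"
    hence zu: "z \<in> ubs (lorentz v) x y" and le: "sigma x y z \<le> sigma x y (zst v x y)"
      using zst_mubs[OF nv] sub unfolding is_qsup_def by auto
    have "\<forall>w\<in>ubs (lorentz v) x y. sigma x y (zst v x y) \<le> sigma x y w"
      using zst_qsup[OF nv] unfolding is_qsup_def by blast
    hence "is_qsup (ubs (lorentz v) x y) x y z" using zu le unfolding is_qsup_def by force
    thus "z = zst v x y" using zst_qsup[OF nv] by blast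
  next
    assume "z = zst v x y"
    thus "is_qsup (mubs (lorentz v) x y) x y z"
      using zst_qsup[OF nv, of x y] zst_mubs[OF nv] sub unfolding is_qsup_def by blast
  qed
qed

lemma L_ups: fixes v :: "'a::real_inner" assumes nv: "norm v = 1"
  shows "ups_quasi_lattice (lorentz v)"
  unfolding ups_quasi_lattice_def
proof (intro conjI allI)
  show "closed (lorentz v)" by (rule L_closed)
  fix x y
  show "ubs (lorentz v) x y \<noteq> {}" using zst_ubs[OF nv, of x y] by blast
  show "\<exists>!z. is_qsup (ubs (lorentz v) x y) x y z"
    by (rule ex1I[of _ "zst v x y"]) (simp_all add: zst_qsup[OF nv])
qed

lemma L_mu: fixes v :: "'a::real_inner" assumes nv: "norm v = 1"
  shows "mu_quasi_lattice (lorentz v)"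
  unfolding mu_quasi_lattice_def
proof (intro conjI allI)
  show "closed (lorentz v)" by (rule L_closed)
  fix x y
  show "mubs (lorentz v) x y \<noteq> {}" using zst_mubs[OF nv, of x y] by blast
  show "\<exists>!z. is_qsup (mubs (lorentz v) x y) x y z"
    by (rule ex1I[of _ "zst v x y"]) (simp_all add: zst_qsup_mu[OF nv])
qed

lemma qsup_ups_eq: fixes v :: "'a::real_inner" assumes nv: "norm v = 1"
  shows "qsup_ups (lorentz v) x y = zst v x y"
  unfolding qsup_ups_def by (rule the_equality) (simp_all add: zst_qsup[OF nv])

lemma qsup_mu_eq: fixes v :: "'a::real_inner" assumes nv: "norm v = 1"
  shows "qsup_mu (lorentz v) x y = zst v x y"
  unfolding qsup_mu_def by (rule the_equality) (simp_all add: zst_qsup_mu[OF nv])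

lemma qabs_eq: fixes v :: "'a::real_inner" assumes nv: "norm v = 1"
  shows "qabs (lorentz v) x = ust v x"
proof -
  have "(1/2::real) *\<^sub>R (x - - x) = x" by (simp add: scaleR_2[symmetric])
  thus ?thesis unfolding qabs_def qsup_ups_eq[OF nv] zst_def by simp
qed

lemma L_conormal: fixes v :: "'a::real_inner" assumes nv: "norm v = 1"
  shows "abs_conormal (lorentz v) 1"
  unfolding abs_conormal_def cle_def
proof
  fix x
  show "\<exists>a\<in>lorentz v. a - - x \<in> lorentz v \<and> a - x \<in> lorentz v \<and> norm a \<le> 1 * norm x"
    using ust_ub[OF nv, of x] L_mid ust_norm[OF nv, of x] by (intro bexI[of _ "ust v x"]) auto
qed

lemma L_normal: fixes v :: "'a::real_inner" assumes nv: "norm v = 1"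
  shows "abs_normal (lorentz v) 1"
  unfolding abs_normal_def cle_def
proof (intro allI impI, elim conjE)
  fix x y assume a: "y - - x \<in> lorentz v" "y - x \<in> lorentz v"
  have h1: "norm (pj v y + pj v x) \<le> v \<bullet> y + v \<bullet> x" using a(1) unfolding L_iff
    by (simp add: inner_add_right)
  have h2: "norm (pj v y - pj v x) \<le> v \<bullet> y - v \<bullet> x" using a(2) unfolding L_iff
    by (simp add: inner_diff_right)
  have m0: "norm (pj v y + pj v x) * norm (pj v y - pj v x) \<le> (v \<bullet> y + v \<bullet> x) * (v \<bullet> y - v \<bullet> x)"
  proof (rule mult_mono[OF h1 h2])
    show "0 \<le> v \<bullet> y + v \<bullet> x" using h1 norm_ge_zero order_trans by blast
  qed simp
  have sq: "(v \<bullet> y + v \<bullet> x) * (v \<bullet> y - v \<bullet> x) = (v \<bullet> y)\<^sup>2 - (v \<bullet> x)\<^sup>2"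
    by (simp add: power2_eq_square algebra_simps)
  have cs: "- ((pj v y + pj v x) \<bullet> (pj v y - pj v x)) \<le> norm (pj v y + pj v x) * norm (pj v y - pj v x)"
    using Cauchy_Schwarz_ineq2[of "pj v y + pj v x" "pj v y - pj v x"] by (simp add: abs_le_iff)
  have ip: "(pj v y + pj v x) \<bullet> (pj v y - pj v x) = (norm (pj v y))\<^sup>2 - (norm (pj v x))\<^sup>2"
    by (simp add: inner_add_left inner_diff_right power2_norm_eq_inner inner_commute[of "pj v x" "pj v y"])
  have "(norm (pj v x))\<^sup>2 + (v \<bullet> x)\<^sup>2 \<le> (norm (pj v y))\<^sup>2 + (v \<bullet> y)\<^sup>2"
    using m0 sq cs ip by linarith
  hence "(norm x)\<^sup>2 \<le> (norm y)\<^sup>2" using norm_sq[OF nv, of x] norm_sq[OF nv, of y] by simp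
  thus "norm x \<le> 1 * norm y" using power2_le_imp_le[of "norm x" "norm y"] by simp
qed


lemma eps_le: fixes a b c :: real
  assumes "\<And>e. e > 0 \<Longrightarrow> a \<le> b + c * e" "c \<ge> 0" shows "a \<le> b"
proof (rule field_le_epsilon)
  fix e :: real assume e: "e > 0"
  have "e / (c + 1) > 0" using e assms(2) by simp
  hence "a \<le> b + c * (e / (c + 1))" by (rule assms(1))
  also have "c * (e / (c + 1)) \<le> e"
  proof -
    have "c * e \<le> (c + 1) * e" using e by simp
    thus ?thesis using assms(2) by (simp add: divide_simps mult.commute)
  qed
  finally show "a \<le> b + e" by simp
qed

lemma cone_half: assumes "preorder_cone C" "p \<in> C" "q \<in> C" "p + q = 2 *\<^sub>R r" shows "r \<in> C"
proof -
  have "(1/2::real) *\<^sub>R (p + q) \<in> C" using assms(1-3) unfolding preorder_cone_def by simp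
  thus ?thesis using assms(4) by simp
qed

lemma pos_att:
  fixes CX :: "'a::real_normed_vector set" and CY :: "'b::real_normed_vector set"
  assumes cx: "preorder_cone CX" and ac: "approx_abs_conormal CX 1" and an: "abs_normal CY 1"
  shows "pos_attained CX CY"
  unfolding pos_attained_def
proof
  fix T assume T: "T \<in> op_cone CX CY"
  define A where "A = insert 0 {norm (blinfun_apply T x) | x. x \<in> CX \<and> norm x = 1}"
  have Ale: "\<forall>t\<in>A. t \<le> norm T" unfolding A_def
    using norm_blinfun[of T] by (auto, metis mult.right_neutral)
  have bdd: "bdd_above A" using Ale by (auto simp: bdd_above_def)
  define M where "M = Sup A"
  have M0: "0 \<le> M" unfolding M_def by (rule cSup_upper[OF _ bdd]) (simp add: A_def)
  have MT: "M \<le> norm T" unfolding M_def by (rule cSup_least) (auto simp: A_def Ale[unfolded A_def])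
  have key: "norm (blinfun_apply T a) \<le> M * norm a" if a: "a \<in> CX" for a
  proof (cases "a = 0")
    case True thus ?thesis by simp
  next
    case False
    hence na: "norm a > 0" by simp
    have a': "(1 / norm a) *\<^sub>R a \<in> CX" using cx a unfolding preorder_cone_def by simp
    have "norm ((1 / norm a) *\<^sub>R a) = 1" using na by simp
    hence "norm (blinfun_apply T ((1 / norm a) *\<^sub>R a)) \<in> A" unfolding A_def using a' by blast
    hence "norm (blinfun_apply T ((1 / norm a) *\<^sub>R a)) \<le> M" unfolding M_def by (rule cSup_upper[OF _ bdd])
    hence "norm (blinfun_apply T a) / norm a \<le> M" by (simp add: blinfun.scaleR_right)
    thus ?thesis using na by (simp add: divide_simps mult.commute)
  qed
  have "norm T \<le> M"
  proof (rule norm_blinfun_bound[OF M0])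
    fix x
    show "norm (blinfun_apply T x) \<le> M * norm x"
    proof (rule eps_le[OF _ M0])
      fix e :: real assume e: "e > 0"
      obtain a where a: "a \<in> CX" "cle CX (- x) a" "cle CX x a" "norm a < 1 * norm x + e"
        using ac e unfolding approx_abs_conormal_def by blast
      have "a + x \<in> CX" "a - x \<in> CX" using a unfolding cle_def by auto
      hence "blinfun_apply T (a + x) \<in> CY" "blinfun_apply T (a - x) \<in> CY"
        using T unfolding op_cone_def by auto
      hence "cle CY (- blinfun_apply T x) (blinfun_apply T a)" "cle CY (blinfun_apply T x) (blinfun_apply T a)"
        unfolding cle_def by (simp_all add: blinfun.add_right blinfun.diff_right)
      hence "norm (blinfun_apply T x) \<le> norm (blinfun_apply T a)"
        using an unfolding abs_normal_def by simp
      also have "\<dots> \<le> M * norm a" by (rule key[OF a(1)])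
      also have "\<dots> \<le> M * (norm x + e)" using a(4) M0 by (intro mult_left_mono) auto
      finally show "norm (blinfun_apply T x) \<le> M * norm x + M * e" by (simp add: algebra_simps)
    qed
  qed
  thus "norm T = Sup A" using MT unfolding M_def by simp
qed

lemma op_normal:
  fixes CX :: "'a::real_normed_vector set" and CY :: "'b::real_normed_vector set"
  assumes cy: "preorder_cone CY" and ac: "approx_abs_conormal CX \<beta>" and an: "abs_normal CY \<gamma>"
    and b0: "\<beta> \<ge> 0" and g0: "\<gamma> \<ge> 0"
  shows "abs_normal (op_cone CX CY) (\<gamma> * \<beta>)"
  unfolding abs_normal_def
proof (intro allI impI, elim conjE)
  fix S T :: "'a \<Rightarrow>\<^sub>L 'b"
  assume h1: "cle (op_cone CX CY) (- S) T" and h2: "cle (op_cone CX CY) S T"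
  have P: "T + S \<in> op_cone CX CY" "T - S \<in> op_cone CX CY" using h1 h2 unfolding cle_def by auto
  have nT: "0 \<le> norm T" by simp
  show "norm S \<le> \<gamma> * \<beta> * norm T"
  proof (rule norm_blinfun_bound)
    show "0 \<le> \<gamma> * \<beta> * norm T" using b0 g0 by simp
    fix x
    show "norm (blinfun_apply S x) \<le> \<gamma> * \<beta> * norm T * norm x"
    proof (rule eps_le)
      show "0 \<le> \<gamma> * norm T" using g0 by simp
      fix e :: real assume e: "e > 0"
      obtain a where a: "a \<in> CX" "cle CX (- x) a" "cle CX x a" "norm a < \<beta> * norm x + e"
        using ac e unfolding approx_abs_conormal_def by blast
      have ax: "a + x \<in> CX" "a - x \<in> CX" using a unfolding cle_def by auto
      have i1: "blinfun_apply (T + S) (a + x) \<in> CY" "blinfun_apply (T - S) (a - x) \<in> CY"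
        "blinfun_apply (T - S) (a + x) \<in> CY" "blinfun_apply (T + S) (a - x) \<in> CY"
        using P ax unfolding op_cone_def by auto
      have "blinfun_apply T a + blinfun_apply S x \<in> CY"
        by (rule cone_half[OF cy i1(1,2)])
           (simp add: blinfun.add_left blinfun.diff_left blinfun.add_right blinfun.diff_right algebra_simps scaleR_2)
      moreover have "blinfun_apply T a - blinfun_apply S x \<in> CY"
        by (rule cone_half[OF cy i1(3,4)])
           (simp add: blinfun.add_left blinfun.diff_left blinfun.add_right blinfun.diff_right algebra_simps scaleR_2)
      ultimately have "cle CY (- blinfun_apply S x) (blinfun_apply T a)" "cle CY (blinfun_apply S x) (blinfun_apply T a)"
        unfolding cle_def by simp_all
      hence "norm (blinfun_apply S x) \<le> \<gamma> * norm (blinfun_apply T a)"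
        using an unfolding abs_normal_def by blast
      also have "\<dots> \<le> \<gamma> * (norm T * norm a)" using g0 norm_blinfun[of T a] by (intro mult_left_mono) auto
      also have "\<dots> \<le> \<gamma> * (norm T * (\<beta> * norm x + e))" using g0 a(4) nT
        by (intro mult_left_mono) auto
      finally show "norm (blinfun_apply S x) \<le> \<gamma> * \<beta> * norm T * norm x + \<gamma> * norm T * e"
        by (simp add: algebra_simps)
    qed
  qed
qed


lemma two_orth:
  fixes v :: "'a::real_inner"
    and S :: "'a set"
  assumes nv: "norm v = 1" and S: "independent S" "finite S" "card S = 3"
  shows "\<exists>a b. a \<noteq> 0 \<and> b \<noteq> 0 \<and> v \<bullet> a = 0 \<and> v \<bullet> b = 0 \<and> a \<bullet> b = 0"
proof (rule ccontr)
  assume no: "\<not> ?thesis"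
  define c where "c = (if \<exists>x. pj v x \<noteq> 0 then pj v (SOME x. pj v x \<noteq> 0) else 0)"
  have cv: "v \<bullet> c = 0" unfolding c_def using P_orth[OF nv] by auto
  have all: "y \<in> span {v, c}" for y
  proof -
    define q where "q = pj v y"
    have qv: "v \<bullet> q = 0" unfolding q_def using P_orth[OF nv] by simp
    have "q \<in> span {v, c}"
    proof (cases "c = 0")
      case True
      hence "\<not> (\<exists>x. pj v x \<noteq> 0)" unfolding c_def by (metis (mono_tags) someI_ex)
      hence "q = 0" unfolding q_def by blast
      thus ?thesis by (simp add: span_zero)
    next
      case False
      define q' where "q' = q - ((q \<bullet> c) / (c \<bullet> c)) *\<^sub>R c"
      have "v \<bullet> q' = 0" unfolding q'_def using qv cv by (simp add: inner_diff_right)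
      moreover have "c \<bullet> q' = 0" unfolding q'_def using False
        by (simp add: inner_diff_right inner_commute)
      ultimately have "q' = 0" using no False cv by blast
      hence "q = ((q \<bullet> c) / (c \<bullet> c)) *\<^sub>R c" unfolding q'_def by simp
      thus ?thesis by (metis insert_iff span_base span_scale)
    qed
    moreover have "y = (v \<bullet> y) *\<^sub>R v + q" unfolding q_def by (rule decomp)
    ultimately show ?thesis by (metis insert_iff span_add span_base span_scale)
  qed
  have "S \<subseteq> span {v, c}" using all by blast
  hence "card S \<le> card {v, c}" using independent_span_bound[of "{v, c}" S] S by simp
  also have "\<dots> \<le> 2" by (simp add: card_insert_le_m1)
  finally show False using S by simp
qed

lemma not_riesz:
  fixes v :: "'a::real_inner"
  assumes nv: "norm v = 1" and S: "\<exists>S :: 'a set. independent S \<and> finite S \<and> card S = 3"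
  shows "\<not> riesz_space (lorentz v)"
proof
  assume R: "riesz_space (lorentz v)"
  obtain a b :: 'a where ab: "a \<noteq> 0" "b \<noteq> 0" "v \<bullet> a = 0" "v \<bullet> b = 0" "a \<bullet> b = 0"
    using two_orth[OF nv] S by blast
  define e1 where "e1 = (1 / norm a) *\<^sub>R a"
  define e2 where "e2 = (1 / norm b) *\<^sub>R b"
  have e: "norm e1 = 1" "norm e2 = 1" "v \<bullet> e1 = 0" "v \<bullet> e2 = 0" "e1 \<bullet> e2 = 0"
    unfolding e1_def e2_def using ab by auto
  have pe: "pj v e1 = e1" "pj v e2 = e2" using e by (simp_all add: P_orthvec)
  have pv: "pj v v = 0" using P_v[OF nv] .
  have vv1: "v \<bullet> v = 1" using vv[OF nv] .
  obtain s where s: "s \<in> ubs (lorentz v) (- e1) e1" and sl: "\<forall>z \<in> ubs (lorentz v) (- e1) e1. cle (lorentz v) s z"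
    using R unfolding riesz_space_def by blast
  have "v \<in> ubs (lorentz v) (- e1) e1"
    unfolding ubs_def cle_def L_iff using e pe pv vv1 by (simp add: inner_add_right inner_diff_right)
  hence sv: "v - s \<in> lorentz v" using sl unfolding cle_def by blast
  have s1: "s + e1 \<in> lorentz v" "s - e1 \<in> lorentz v" using s unfolding ubs_def cle_def by auto
  have "1 \<le> v \<bullet> s" using ub_bound[OF s1] pe e by simp
  moreover have "norm (pj v (v - s)) \<le> v \<bullet> (v - s)" using sv unfolding L_iff .
  moreover have "v \<bullet> (v - s) = 1 - v \<bullet> s" using vv1 by (simp add: inner_diff_right)
  ultimately have "norm (pj v (v - s)) = 0" "v \<bullet> (v - s) = 0"
    using norm_ge_zero[of "pj v (v - s)"] by linarith+
  hence "pj v (v - s) = 0" "v \<bullet> (v - s) = 0" by (simp_all del: P_diff)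
  hence "v - s = 0" using decomp[of "v - s" v] by (simp del: P_diff)
  hence sv: "s = v" by simp
  define u where "u = 3 *\<^sub>R v + (5/2) *\<^sub>R e2"
  have n29: "norm ((5/2) *\<^sub>R e2 + c *\<^sub>R e1) \<le> 3" if "c = 1 \<or> c = -1" for c :: real
  proof -
    have "(norm ((5/2) *\<^sub>R e2 + c *\<^sub>R e1))\<^sup>2 = ((5/2) *\<^sub>R e2 + c *\<^sub>R e1) \<bullet> ((5/2) *\<^sub>R e2 + c *\<^sub>R e1)"
      by (simp add: power2_norm_eq_inner)
    also have "\<dots> = 25/4 * (e2 \<bullet> e2) + 5 * c * (e1 \<bullet> e2) + c * c * (e1 \<bullet> e1)"
      by (simp add: inner_add_left inner_add_right inner_commute algebra_simps)
    also have "\<dots> \<le> 3\<^sup>2" using e that by (auto simp: norm_eq_sqrt_inner)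
    finally show ?thesis by (rule power2_le_imp_le) simp
  qed
  have "u \<in> ubs (lorentz v) (- e1) e1"
    unfolding ubs_def cle_def L_iff
  proof (intro CollectI conjI)
    have "pj v (u - - e1) = (5/2) *\<^sub>R e2 + 1 *\<^sub>R e1" unfolding u_def using pe pv by simp
    moreover have "v \<bullet> (u - - e1) = 3" unfolding u_def using e vv1 by (simp add: inner_add_right)
    ultimately show "norm (pj v (u - - e1)) \<le> v \<bullet> (u - - e1)" using n29[of 1] by simp
    have "pj v (u - e1) = (5/2) *\<^sub>R e2 + (-1) *\<^sub>R e1" unfolding u_def using pe pv by simp
    moreover have "v \<bullet> (u - e1) = 3" unfolding u_def using e vv1 by (simp add: inner_add_right inner_diff_right)
    ultimately show "norm (pj v (u - e1)) \<le> v \<bullet> (u - e1)" using n29[of "-1"] by simp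
  qed
  hence "u - v \<in> lorentz v" using sl sv unfolding cle_def by blast
  moreover have "pj v (u - v) = (5/2) *\<^sub>R e2" unfolding u_def using pe pv by simp
  moreover have "v \<bullet> (u - v) = 2" unfolding u_def using e vv1 by (simp add: inner_add_right inner_diff_right)
  ultimately show False unfolding L_iff using e by simp
qed

lemma not_bl: "\<not> riesz_space C \<Longrightarrow> \<not> banach_lattice C"
  unfolding banach_lattice_def by simp

lemma conormal_approx: "abs_conormal C \<alpha> \<Longrightarrow> approx_abs_conormal C \<alpha>"
  unfolding abs_conormal_def approx_abs_conormal_def
  by (meson add_less_cancel_left le_less_trans less_add_same_cancel1)

theorem theorem7p10:
  fixes v :: "'h::{real_inner, complete_space}"
    and w :: "'k::{real_inner, complete_space}"
  assumes "norm v = 1"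
  shows
    "((\<exists>S :: 'h set. independent S \<and> finite S \<and> card S = 3) \<longrightarrow>
        \<not> riesz_space (lorentz v) \<and> \<not> banach_lattice (lorentz v))
   \<and> ups_quasi_lattice (lorentz v)
   \<and> abs_monotone (lorentz v)
   \<and> mu_quasi_lattice (lorentz v)
   \<and> (\<forall>x y. qsup_ups (lorentz v) x y = qsup_mu (lorentz v) x y)
   \<and> (\<forall>x. norm x = norm (qabs (lorentz v) x))
   \<and> abs_conormal (lorentz v) 1
   \<and> abs_davies_ng (lorentz v) 1
   \<and> (\<forall>(CX :: 'x::banach set) (CY :: 'y::banach set).
        preorder_cone CX \<and> closed CX \<and> preorder_cone CY \<and> closed CY \<and>
        approx_abs_conormal CX 1 \<and> abs_monotone CY \<longrightarrow>
        pos_attained CX (lorentz v) \<and> pos_attained (lorentz v) CY)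
   \<and> (norm w = 1 \<longrightarrow> pos_attained (lorentz v) (lorentz w))
   \<and> (\<forall>(\<alpha>::real) (CX :: 'x::banach set) (CY :: 'y::banach set).
        \<alpha> > 0 \<and> preorder_cone CX \<and> closed CX \<and> preorder_cone CY \<and> closed CY \<and>
        approx_abs_conormal CX \<alpha> \<and> abs_normal CY \<alpha> \<longrightarrow>
        abs_normal (op_cone CX (lorentz v)) \<alpha> \<and> abs_normal (op_cone (lorentz v) CY) \<alpha>)
   \<and> (norm w = 1 \<longrightarrow> abs_monotone (op_cone (lorentz v) (lorentz w)))"
proof -
  note nv = assms
  have apL: "approx_abs_conormal (lorentz v) 1" by (rule conormal_approx[OF L_conormal[OF nv]])
  show ?thesis
  proof (intro conjI allI impI)
    assume "\<exists>S :: 'h set. independent S \<and> finite S \<and> card S = 3"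
    thus nr: "\<not> riesz_space (lorentz v)" by (rule not_riesz[OF nv])
    thus "\<not> banach_lattice (lorentz v)" by (rule not_bl)
  next
    show "ups_quasi_lattice (lorentz v)" by (rule L_ups[OF nv])
  next
    show "abs_monotone (lorentz v)" by (rule L_normal[OF nv])
  next
    show "mu_quasi_lattice (lorentz v)" by (rule L_mu[OF nv])
  next
    fix x y show "qsup_ups (lorentz v) x y = qsup_mu (lorentz v) x y"
      using qsup_ups_eq[OF nv] qsup_mu_eq[OF nv] by simp
  next
    fix x show "norm x = norm (qabs (lorentz v) x)"
      using qabs_eq[OF nv] ust_norm[OF nv] by simp
  next
    show "abs_conormal (lorentz v) 1" by (rule L_conormal[OF nv])
  next
    show "abs_davies_ng (lorentz v) 1" unfolding abs_davies_ng_def using L_normal[OF nv] apL by simp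
  next
    fix CX :: "'x::banach set" and CY :: "'y::banach set"
    assume h: "preorder_cone CX \<and> closed CX \<and> preorder_cone CY \<and> closed CY \<and>
        approx_abs_conormal CX 1 \<and> abs_monotone CY"
    show "pos_attained CX (lorentz v)" using pos_att[of CX "lorentz v"] h L_normal[OF nv] by blast
    show "pos_attained (lorentz v) CY" using pos_att[OF L_cone apL, of CY] h by blast
  next
    assume "norm w = 1"
    thus "pos_attained (lorentz v) (lorentz w)" using pos_att[OF L_cone apL L_normal] by blast
  next
    fix \<alpha> :: real and CX :: "'x::banach set" and CY :: "'y::banach set"
    assume h: "\<alpha> > 0 \<and> preorder_cone CX \<and> closed CX \<and> preorder_cone CY \<and> closed CY \<and>
        approx_abs_conormal CX \<alpha> \<and> abs_normal CY \<alpha>"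
    have "abs_normal (op_cone CX (lorentz v)) (1 * \<alpha>)"
      using op_normal[OF L_cone, of CX \<alpha> v 1] h L_normal[OF nv] by simp
    thus "abs_normal (op_cone CX (lorentz v)) \<alpha>" by simp
    have "abs_normal (op_cone (lorentz v) CY) (\<alpha> * 1)"
      using op_normal[of CY "lorentz v" 1 \<alpha>] h apL by simp
    thus "abs_normal (op_cone (lorentz v) CY) \<alpha>" by simp
  next
    assume "norm w = 1"
    hence "abs_normal (op_cone (lorentz v) (lorentz w)) (1 * 1)"
      using op_normal[OF L_cone apL L_normal] by simp
    thus "abs_monotone (op_cone (lorentz v) (lorentz w))" by simp
  qed
qed

end
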